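(* Consider the closed compartmental reaction-diffusion system on $\bar{\mathbb{R}}_+^{mN}$ $$\dot X=F^*(X):=-\big(( *_0)^{-1}\otimes I_m\big)\,\Delta_d(X)\,\frac{X}{X^*}+F(X),$$ with $\Delta_d(X)=(\mathbf{d}\otimes I_m)^{\mathrm{T}}( *_1\otimes I_m)R_d(X)(\mathbf{d}\otimes I_m)$, where all objects are as described in the context. Suppose $X:[0,t^*]\to\bar{\mathbb{R}}_+^{mN}$ is any solution of this system. Then for every $k=1,\dots,mN$: if $X_k(0)>0$ then $X_k(t^* )>0$.
   Context: Reaction network: $m$ species, $c$ complexes, $r$ reactions; $Z$ is the $m\times c$ complex stoichiometric matrix (nonnegative integer entries, column $\rho$ gives the species composition of complex $\rho$); $B$ is the $c\times r$ incidence matrix of the directed complex graph (each column has one $+1$ at the substrate complex and one $-1$ at the product complex of the reaction); $x^*\in\mathbb{R}_+^m$ (all entries strictly positive) is a thermodynamic equilibrium and $\mathcal{K}(x^* )=\mathrm{diag}(\kappa_1,\dots,\kappa_r)$ with all $\kappa_j>0$. The reaction vector field is $f(x)=-ZB\mathcal{K}(x^* )B^{\mathrm{T}}\mathrm{Exp}\big(Z^{\mathrm{T}}\mathrm{Ln}(x/x^* )\big)$, where $\mathrm{Ln}$, $\mathrm{Exp}$ act componentwise and $x/x^*$ is the componentwise quotient; since the entries of $\mathrm{Exp}(Z^{\mathrm{T}}\mathrm{Ln}(x/x^* ))$ are the monomials $\prod_i (x_i/x_i^* )^{Z_{i\rho}}$, $f$ extends to $\bar{\mathbb{R}}_+^m$.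 Spatial discretization: a simplicial triangulation $K$ of the spatial domain with $N$ vertices and $N_e$ edges; $\mathbf{d}$ is the $N_e\times N$ matrix that is the transpose of the (oriented) vertex-edge incidence matrix of the 1-skeleton of $K$; $*_0$ is an $N\times N$ positive diagonal matrix (volumes of the dual cells of the vertices) and $*_1$ an $N_e\times N_e$ positive diagonal matrix. $X=((x^1)^{\mathrm{T}},\dots,(x^N)^{\mathrm{T}})^{\mathrm{T}}$ with $x^j\in\bar{\mathbb{R}}_+^m$ the concentrations in compartment $j$, $X^*=((x^* )^{\mathrm{T}},\dots,(x^* )^{\mathrm{T}})^{\mathrm{T}}$, $X/X^*$ the componentwise quotient, $F(X)=(f(x^1)^{\mathrm{T}},\dots,f(x^N)^{\mathrm{T}})^{\mathrm{T}}$. $R_d(X)$ is an $mN_e\times mN_e$ diagonal matrix with $R_d(X)\ge\alpha I$ for some $\alpha>0$, depending continuously differentiably on $X$. $\otimes$ is the Kronecker product and $I_m$ the $m\times m$ identity. *)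

theory Defs
  imports "HOL-Analysis.Analysis"
begin

text \<open>With X stacked as
  (x^1,...,x^N), the index (j,i) (vertex j, species i) corresponds to (j-1)m+i.\<close>
definition kron :: "real^'n^'m \<Rightarrow> real^'q^'p \<Rightarrow> real^('n::finite \<times> 'q::finite)^('m::finite \<times> 'p::finite)" where
  "kron A B = (\<chi> p q. A$(fst p)$(fst q) * B$(snd p)$(snd q))"

definition diagm :: "real^'n \<Rightarrow> real^'n^'n" where
  "diagm v = (\<chi> i j. if i = j then v$i else 0)"

definition is_pos_diag :: "real^'n^'n \<Rightarrow> bool" where
  "is_pos_diag A \<longleftrightarrow> (\<forall>i j. i \<noteq> j \<longrightarrow> A$i$j = 0) \<and> (\<forall>i. A$i$i > 0)"

text \<open>Incidence matrix of a directed graph (c x r): each column has one +1 at the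
  substrate and one -1 at the (distinct) product, zeros elsewhere.\<close>
definition is_incidence_cols :: "real^'r^'c \<Rightarrow> bool" where
  "is_incidence_cols B \<longleftrightarrow> (\<forall>j. \<exists>s p. s \<noteq> p \<and> B$s$j = 1 \<and> B$p$j = -1 \<and>
      (\<forall>\<rho>. \<rho> \<noteq> s \<and> \<rho> \<noteq> p \<longrightarrow> B$\<rho>$j = 0))"

text \<open>Transpose of the oriented vertex-edge incidence matrix of the 1-skeleton of a
  simplicial complex (N_e x N): each row (edge) has one +1 and one -1 at two distinct
  vertices and zeros elsewhere; distinct edges have distinct vertex pairs.\<close>
definition edge_ends :: "real^'v^'e \<Rightarrow> 'e \<Rightarrow> 'v set" where
  "edge_ends d e = {v. d$e$v \<noteq> 0}"

definition is_skeleton_incidence :: "real^'v^'e \<Rightarrow> bool" where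
  "is_skeleton_incidence d \<longleftrightarrow>
     (\<forall>e. \<exists>u w. u \<noteq> w \<and> d$e$u = 1 \<and> d$e$w = -1 \<and>
         (\<forall>v. v \<noteq> u \<and> v \<noteq> w \<longrightarrow> d$e$v = 0)) \<and>
     (\<forall>e e'. e \<noteq> e' \<longrightarrow> edge_ends d e \<noteq> edge_ends d e')"

text \<open>Vector of monomials Exp(Z^T Ln(x/x*)), extended to the closed orthant.\<close>
definition monomials :: "nat^'c^'m \<Rightarrow> real^'m \<Rightarrow> real^'m \<Rightarrow> real^'c" where
  "monomials Z xs x = (\<chi> \<rho>. \<Prod>i\<in>UNIV. (x$i / xs$i) ^ (Z$i$\<rho>))"

definition realmat :: "nat^'c^'m \<Rightarrow> real^'c^'m" where
  "realmat Z = (\<chi> i \<rho>. real (Z$i$\<rho>))"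

definition reaction_field ::
  "nat^'c^'m \<Rightarrow> real^'r^'c \<Rightarrow> real^'r \<Rightarrow> real^'m \<Rightarrow> real^'m \<Rightarrow> real^'m" where
  "reaction_field Z B \<kappa> xs x =
     - ((realmat Z ** B ** diagm \<kappa> ** transpose B) *v monomials Z xs x)"

definition quot_star :: "real^('v::finite \<times> 'm::finite) \<Rightarrow> real^'m \<Rightarrow> real^('v::finite \<times> 'm::finite)" where
  "quot_star X xs = (\<chi> p. X$p / xs$(snd p))"

definition compartment :: "real^('v::finite \<times> 'm::finite) \<Rightarrow> 'v \<Rightarrow> real^'m" where
  "compartment X j = (\<chi> i. X$(j,i))"

definition big_F ::
  "nat^'c^'m \<Rightarrow> real^'r^'c \<Rightarrow> real^'r \<Rightarrow> real^'m \<Rightarrow> real^('v::finite \<times> 'm::finite) \<Rightarrow> real^('v::finite \<times> 'm::finite)" where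
  "big_F Z B \<kappa> xs X = (\<chi> p. reaction_field Z B \<kappa> xs (compartment X (fst p)) $ (snd p))"

definition Delta_d ::
  "real^'v^'e \<Rightarrow> real^'e^'e \<Rightarrow> real^('e::finite \<times> 'm::finite)^('e::finite \<times> 'm::finite) \<Rightarrow> real^('v::finite \<times> 'm::finite)^('v::finite \<times> 'm::finite)" where
  "Delta_d d star1 R =
     transpose (kron d (mat 1 :: real^'m^'m)) ** kron star1 (mat 1 :: real^'m^'m) ** R
       ** kron d (mat 1 :: real^'m^'m)"

definition F_star ::
  "nat^'c^'m \<Rightarrow> real^'r^'c \<Rightarrow> real^'r \<Rightarrow> real^'m \<Rightarrow> real^'v^'e \<Rightarrow> real^'v^'v \<Rightarrow> real^'e^'e
   \<Rightarrow> (real^('v::finite \<times> 'm::finite) \<Rightarrow> real^('e::finite \<times> 'm::finite)^('e::finite \<times> 'm::finite)) \<Rightarrow> real^('v::finite \<times> 'm::finite) \<Rightarrow> real^('v::finite \<times> 'm::finite)" where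
  "F_star Z B \<kappa> xs d star0 star1 Rd X =
     - ((kron (matrix_inv star0) (mat 1 :: real^'m^'m) ** Delta_d d star1 (Rd X))
          *v quot_star X xs)
     + big_F Z B \<kappa> xs X"

definition nonneg_orthant :: "(real^'k) set" where
  "nonneg_orthant = {X. \<forall>k. 0 \<le> X$k}"

end

theory Submission
  imports Defs
begin

lemma diag_left:
  fixes P :: "real^'n^'n" and Q :: "real^'k^'n"
  assumes "\<forall>a b. a \<noteq> b \<longrightarrow> P$a$b = 0"
  shows "(P ** Q)$a$b = P$a$a * Q$a$b"
proof -
  have "(P ** Q)$a$b = (\<Sum>k\<in>UNIV. P$a$k * Q$k$b)" by (simp add: matrix_matrix_mult_def)
  also have "\<dots> = (\<Sum>k\<in>UNIV. if k = a then P$a$a * Q$a$b else 0)"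
    by (rule sum.cong) (use assms in auto)
  finally show ?thesis by simp
qed

lemma quad_entry:
  fixes D :: "real^'n^'p" and W :: "real^'p^'p"
  assumes "\<forall>a b. a \<noteq> b \<longrightarrow> W$a$b = 0"
  shows "(transpose D ** W ** D)$a$b = (\<Sum>p\<in>UNIV. D$p$a * W$p$p * D$p$b)"
proof -
  have "(transpose D ** W)$a$p = D$p$a * W$p$p" for p
  proof -
    have "(transpose D ** W)$a$p = (\<Sum>k\<in>UNIV. D$k$a * W$k$p)" by (simp add: matrix_matrix_mult_def transpose_def)
    also have "\<dots> = (\<Sum>k\<in>UNIV. if k = p then D$p$a * W$p$p else 0)"
      by (rule sum.cong) (use assms in auto)
    finally show ?thesis by simp
  qed
  then show ?thesis unfolding matrix_matrix_mult_def[of "transpose D ** W" D] by simp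
qed

lemma metzler_row:
  fixes L :: "real^'n^'n" and y :: "real^'n"
  assumes "\<forall>b. b \<noteq> a \<longrightarrow> L$a$b \<le> 0" "\<forall>b. y$b \<ge> 0"
  shows "(L *v y)$a \<le> L$a$a * y$a"
proof -
  have "(L *v y)$a = (\<Sum>b\<in>UNIV. L$a$b * y$b)" by (simp add: matrix_vector_mult_def)
  also have "\<dots> \<le> (\<Sum>b\<in>UNIV. if b = a then L$a$a * y$a else 0)"
    apply (rule sum_mono) using assms by (auto simp: mult_nonpos_nonneg)
  also have "\<dots> = L$a$a * y$a" by simp
  finally show ?thesis .
qed

lemma pm_prod:
  fixes x :: "'a \<Rightarrow> real"
  assumes "s \<noteq> p" "x s = 1" "x p = -1" "\<forall>r. r \<noteq> s \<and> r \<noteq> p \<longrightarrow> x r = 0" "a \<noteq> b"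
  shows "x a * x b \<le> 0"
  using assms by (cases "a = s"; cases "a = p"; cases "b = s"; cases "b = p"; auto)

lemma Z_split:
  fixes Z :: "nat^'c^'m" and xs x :: "real^'m"
  shows "real (Z$i$r) * monomials Z xs x $ r =
     real (Z$i$r) * (x$i/xs$i) * (\<Prod>l\<in>UNIV. (x$l / xs$l) ^ (Z$l$r - (if l = i then 1 else 0)))"
proof (cases "Z$i$r = 0")
  case True then show ?thesis by simp
next
  case False
  define f where "f l = x$l / xs$l" for l
  have A: "monomials Z xs x $ r = (\<Prod>l\<in>UNIV. f l ^ (Z$l$r))"
    unfolding monomials_def f_def by simp
  have B: "(\<Prod>l\<in>UNIV. f l ^ (Z$l$r)) = f i ^ (Z$i$r) * (\<Prod>l\<in>UNIV-{i}. f l ^ (Z$l$r))"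
    by (rule prod.remove) auto
  have C: "(\<Prod>l\<in>UNIV. f l ^ (Z$l$r - (if l = i then 1 else 0)))
     = f i ^ (Z$i$r - (if i = i then 1 else 0)) * (\<Prod>l\<in>UNIV-{i}. f l ^ (Z$l$r - (if l = i then 1 else 0)))"
    by (rule prod.remove) auto
  have C': "(\<Prod>l\<in>UNIV. f l ^ (Z$l$r - (if l = i then 1 else 0)))
     = f i ^ (Z$i$r - 1) * (\<Prod>l\<in>UNIV-{i}. f l ^ (Z$l$r - (if l = i then 1 else 0)))" using C by simp
  have D: "(\<Prod>l\<in>UNIV-{i}. f l ^ (Z$l$r - (if l = i then 1 else 0))) = (\<Prod>l\<in>UNIV-{i}. f l ^ (Z$l$r))"
    by (rule prod.cong) auto
  have E: "f i ^ (Z$i$r) = f i * f i ^ (Z$i$r - 1)"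
    using False by (cases "Z$i$r") auto
  have "real (Z$i$r) * monomials Z xs x $ r = real (Z$i$r) * f i * (\<Prod>l\<in>UNIV. f l ^ (Z$l$r - (if l = i then 1 else 0)))"
    unfolding A B C' D E by (simp only: mult_ac)
  then show ?thesis unfolding f_def .
qed

lemma kron_I_entry:
  "kron (A::real^'n^'k) (mat 1 :: real^'m^'m) $ p $ q = A $ fst p $ fst q * (if snd p = snd q then 1 else 0)"
  unfolding kron_def mat_def vec_lambda_beta by (rule refl)

lemma kron_diag:
  assumes "\<forall>a b. a \<noteq> b \<longrightarrow> (A::real^'n^'n)$a$b = 0"
  shows "\<forall>p q. p \<noteq> q \<longrightarrow> kron A (mat 1 :: real^'m^'m) $ p $ q = 0"
  using assms by (auto simp: kron_I_entry prod_eq_iff)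

lemma inv_diag:
  fixes s0 :: "real^'n^'n"
  assumes "is_pos_diag s0"
  shows "(\<forall>a b. a \<noteq> b \<longrightarrow> matrix_inv s0$a$b = 0) \<and> (\<forall>a. matrix_inv s0$a$a \<ge> 0)"
proof -
  define D0 :: "real^'n^'n" where "D0 = (\<chi> a b. if a = b then 1 / s0$a$a else 0)"
  have s0d: "\<forall>a b. a \<noteq> b \<longrightarrow> s0$a$b = 0" and s0p: "\<forall>a. s0$a$a > 0"
    using assms by (auto simp: is_pos_diag_def)
  have D0d: "\<forall>a b. a \<noteq> b \<longrightarrow> D0$a$b = 0" by (simp add: D0_def)
  have 1: "s0 ** D0 = mat 1"
  proof -
    have "(s0 ** D0)$a$b = (mat 1 :: real^'n^'n)$a$b" for a b
    proof -
      have "(s0 ** D0)$a$b = s0$a$a * D0$a$b" by (rule diag_left[OF s0d])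
      also have "\<dots> = (if a = b then 1 else 0)"
      proof (cases "a = b")
        case True
        have "s0$a$a \<noteq> 0" using s0p by (metis less_irrefl)
        then show ?thesis using True by (simp add: D0_def)
      next
        case False then show ?thesis by (simp add: D0_def)
      qed
      finally show ?thesis by (simp add: mat_def)
    qed
    then show ?thesis by (simp add: vec_eq_iff)
  qed
  have "(D0 ** s0)$a$b = (mat 1 :: real^'n^'n)$a$b" for a b
  proof -
    have "(D0 ** s0)$a$b = D0$a$a * s0$a$b" by (rule diag_left[OF D0d])
    also have "\<dots> = (if a = b then 1 else 0)"
    proof (cases "a = b")
      case True
      have "s0$a$a \<noteq> 0" using s0p by (metis less_irrefl)
      then show ?thesis using True by (simp add: D0_def)
    next
      case False then show ?thesis using s0d by simp
    qed
    finally show ?thesis by (simp add: mat_def)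
  qed
  then have 2: "D0 ** s0 = mat 1" by (simp add: vec_eq_iff)
  define A' where "A' = matrix_inv s0"
  have "s0 ** A' = mat 1 \<and> A' ** s0 = mat 1"
    unfolding A'_def matrix_inv_def by (rule someI[of _ D0]) (use 1 2 in auto)
  then have "A' = D0"
    by (metis 1 matrix_mul_assoc matrix_mul_lid matrix_mul_rid)
  then show ?thesis using s0p unfolding A'_def D0_def by (auto simp: less_imp_le)
qed

lemma quad_offdiag:
  fixes D :: "real^'n^'p" and W :: "real^'p^'p"
  assumes "\<forall>a b. a \<noteq> b \<longrightarrow> W$a$b = 0" "\<forall>p. W$p$p \<ge> 0"
    "\<forall>p. D$p$a * D$p$b \<le> 0"
  shows "(transpose D ** W ** D)$a$b \<le> 0"
  unfolding quad_entry[OF assms(1)]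
proof (rule sum_nonpos)
  fix p
  have "D$p$a * W$p$p * D$p$b = (D$p$a * D$p$b) * W$p$p" by simp
  also have "\<dots> \<le> 0" using assms by (simp add: mult_nonpos_nonneg)
  finally show "D$p$a * W$p$p * D$p$b \<le> 0" .
qed

lemma Dt_prod:
  fixes d :: "real^'v^'e"
  assumes "is_skeleton_incidence d" "a \<noteq> b"
  shows "kron d (mat 1 :: real^'m^'m) $ p $ a * kron d (mat 1 :: real^'m^'m) $ p $ b \<le> 0"
proof (cases "snd a = snd b")
  case False
  then show ?thesis by (auto simp: kron_I_entry)
next
  case True
  with assms(2) have ne: "fst a \<noteq> fst b" by (simp add: prod_eq_iff)
  obtain u w where "u \<noteq> w" "d$fst p$u = 1" "d$fst p$w = -1"
    "\<forall>v. v \<noteq> u \<and> v \<noteq> w \<longrightarrow> d$fst p$v = 0"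
    using assms(1) unfolding is_skeleton_incidence_def by blast
  then have "d$fst p$fst a * d$fst p$fst b \<le> 0"
    using pm_prod[of u w "\<lambda>v. d$fst p$v" "fst a" "fst b"] ne by auto
  then show ?thesis by (auto simp: kron_I_entry)
qed

lemma B_prod:
  fixes B :: "real^'r^'c"
  assumes "is_incidence_cols B" "a \<noteq> b"
  shows "B$a$j * B$b$j \<le> 0"
proof -
  obtain s p where "s \<noteq> p" "B$s$j = 1" "B$p$j = -1" "\<forall>r. r \<noteq> s \<and> r \<noteq> p \<longrightarrow> B$r$j = 0"
    using assms(1) unfolding is_incidence_cols_def by blast
  then show ?thesis using pm_prod[of s p "\<lambda>r. B$r$j" a b] assms(2) by auto
qed

lemma cont_mm:
  fixes A :: "'a::topological_space \<Rightarrow> real^'n^'m" and C :: "'a \<Rightarrow> real^'k^'n"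
  assumes "continuous_on s A" "continuous_on s C"
  shows "continuous_on s (\<lambda>t. A t ** C t)"
  unfolding matrix_matrix_mult_def using assms by (intro continuous_intros)

lemma diff_bound:
  fixes d :: "real^'v::finite^'e::finite" and star0 :: "real^'v^'v" and star1 :: "real^'e^'e"
    and R :: "real^('e \<times> 'm::finite)^('e \<times> 'm)" and Y :: "real^('v \<times> 'm)" and xs :: "real^'m"
  assumes d_inc: "is_skeleton_incidence d" and s0: "is_pos_diag star0" and s1: "is_pos_diag star1"
    and Rdg: "\<forall>p q. p \<noteq> q \<longrightarrow> R$p$q = 0" and Rp: "\<forall>p. R$p$p \<ge> 0"
    and Yp: "\<forall>p. Y$p \<ge> 0" and xsp: "\<forall>i. xs$i > 0"
  shows "((kron (matrix_inv star0) (mat 1 :: real^'m^'m) ** Delta_d d star1 R) *v quot_star Y xs)$k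
      \<le> (kron (matrix_inv star0) (mat 1 :: real^'m^'m) ** Delta_d d star1 R)$k$k * (Y$k / xs$(snd k))"
proof -
  define Kinv where "Kinv = kron (matrix_inv star0) (mat 1 :: real^'m^'m)"
  define Dt where "Dt = kron d (mat 1 :: real^'m^'m)"
  define Ks1 where "Ks1 = kron star1 (mat 1 :: real^'m^'m)"
  have invd: "\<forall>a b. a \<noteq> b \<longrightarrow> matrix_inv star0$a$b = 0" "\<forall>a. matrix_inv star0$a$a \<ge> 0"
    using inv_diag[OF s0] by auto
  have Kd: "\<forall>p q. p \<noteq> q \<longrightarrow> Kinv $ p $ q = 0"
    unfolding Kinv_def by (rule kron_diag[OF invd(1)])
  have Kp: "Kinv$k$k \<ge> 0" using invd(2) by (simp add: Kinv_def kron_I_entry)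
  have s1d: "\<forall>a b. a \<noteq> b \<longrightarrow> star1$a$b = 0" and s1p: "\<forall>a. star1$a$a > 0"
    using s1 by (auto simp: is_pos_diag_def)
  have K1d: "\<forall>p q. p \<noteq> q \<longrightarrow> Ks1 $ p $ q = 0"
    unfolding Ks1_def by (rule kron_diag[OF s1d])
  have Wd: "\<forall>p q. p \<noteq> q \<longrightarrow> (Ks1 ** R) $ p $ q = 0"
    using Rdg by (simp add: diag_left[OF K1d])
  have Wp: "\<forall>p. (Ks1 ** R) $ p $ p \<ge> 0"
  proof
    fix p
    have "(Ks1 ** R) $ p $ p = Ks1$p$p * R$p$p" by (rule diag_left[OF K1d])
    moreover have "Ks1$p$p = star1$fst p$fst p" by (simp add: Ks1_def kron_I_entry)
    moreover have "0 \<le> star1$fst p$fst p" using s1p less_imp_le by blast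
    moreover have "0 \<le> R$p$p" using Rp by blast
    ultimately show "(Ks1 ** R) $ p $ p \<ge> 0" by simp
  qed
  have Del: "Delta_d d star1 R = transpose Dt ** (Ks1 ** R) ** Dt"
    unfolding Delta_d_def Dt_def Ks1_def by (simp add: matrix_mul_assoc)
  have off: "(Kinv ** Delta_d d star1 R)$k$b \<le> 0" if "b \<noteq> k" for b
  proof -
    have "(transpose Dt ** (Ks1 ** R) ** Dt)$k$b \<le> 0"
      apply (rule quad_offdiag[OF Wd Wp])
      using Dt_prod[OF d_inc] that unfolding Dt_def by (metis mult.commute)
    then have "Kinv$k$k * (transpose Dt ** (Ks1 ** R) ** Dt)$k$b \<le> 0"
      using Kp by (simp add: mult_nonneg_nonpos)
    then show ?thesis unfolding Del diag_left[OF Kd] .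
  qed
  have qp: "\<forall>b. quot_star Y xs $ b \<ge> 0"
    using Yp xsp by (simp add: quot_star_def less_imp_le)
  have "((Kinv ** Delta_d d star1 R) *v quot_star Y xs)$k
       \<le> (Kinv ** Delta_d d star1 R)$k$k * quot_star Y xs $ k"
    by (rule metzler_row) (use off qp in auto)
  then show ?thesis unfolding Kinv_def by (simp add: quot_star_def)
qed

definition gfun :: "nat^'c::finite^'m::finite \<Rightarrow> real^'r^'c \<Rightarrow> real^'r \<Rightarrow> real^'m \<Rightarrow> 'm \<Rightarrow> real^'m \<Rightarrow> real" where
  "gfun Z B \<kappa> xs i x = (\<Sum>\<sigma>\<in>UNIV. (B ** diagm \<kappa> ** transpose B)$\<sigma>$\<sigma> * real (Z$i$\<sigma>) / xs$i *
      (\<Prod>l\<in>UNIV. (x$l / xs$l) ^ (Z$l$\<sigma> - (if l = i then 1 else 0))))"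

lemma react_bound:
  fixes Z :: "nat^'c^'m" and B :: "real^'r^'c" and \<kappa> :: "real^'r" and xs x :: "real^'m"
  assumes B_inc: "is_incidence_cols B" and kp: "\<forall>j. \<kappa>$j > 0" and xsp: "\<forall>i. xs$i > 0"
    and xp: "\<forall>l. x$l \<ge> 0"
  shows "reaction_field Z B \<kappa> xs x $ i \<ge> - (x$i * gfun Z B \<kappa> xs i x)"
proof -
  define L where "L = B ** diagm \<kappa> ** transpose B"
  define \<Phi> where "\<Phi> = monomials Z xs x"
  have eq: "reaction_field Z B \<kappa> xs x = - (realmat Z *v (L *v \<Phi>))"
    unfolding reaction_field_def L_def \<Phi>_def by (simp add: matrix_vector_mul_assoc matrix_mul_assoc)
  have Kd: "\<forall>a b. a \<noteq> b \<longrightarrow> diagm \<kappa> $ a $ b = 0" by (simp add: diagm_def)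
  have Kp: "\<forall>p. diagm \<kappa> $ p $ p \<ge> 0" using kp by (simp add: diagm_def less_imp_le)
  have Loff: "L$a$b \<le> 0" if "b \<noteq> a" for a b
  proof -
    have "(transpose (transpose B) ** diagm \<kappa> ** transpose B)$a$b \<le> 0"
      apply (rule quad_offdiag[OF Kd Kp])
      using B_prod[OF B_inc] that by (simp add: transpose_def)
    then show ?thesis by (simp add: L_def)
  qed
  have \<Phi>p: "\<forall>b. \<Phi>$b \<ge> 0"
    using xp xsp by (simp add: \<Phi>_def monomials_def prod_nonneg less_imp_le)
  have row: "(L *v \<Phi>)$\<sigma> \<le> L$\<sigma>$\<sigma> * \<Phi>$\<sigma>" for \<sigma>
    by (rule metzler_row) (use Loff \<Phi>p in auto)
  have "(realmat Z *v (L *v \<Phi>))$i = (\<Sum>\<sigma>\<in>UNIV. real (Z$i$\<sigma>) * (L *v \<Phi>)$\<sigma>)"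
    by (simp add: matrix_vector_mult_def realmat_def)
  also have "\<dots> \<le> (\<Sum>\<sigma>\<in>UNIV. real (Z$i$\<sigma>) * (L$\<sigma>$\<sigma> * \<Phi>$\<sigma>))"
    by (rule sum_mono) (simp add: mult_left_mono row)
  also have "\<dots> = (\<Sum>\<sigma>\<in>UNIV. L$\<sigma>$\<sigma> * (real (Z$i$\<sigma>) * \<Phi>$\<sigma>))"
    by (simp add: algebra_simps)
  also have "\<dots> = x$i * gfun Z B \<kappa> xs i x"
    unfolding \<Phi>_def Z_split gfun_def sum_distrib_left L_def
    by (rule sum.cong) (simp_all add: field_simps)
  finally show ?thesis unfolding eq by simp
qed

theorem lemma5:
  fixes Z :: "nat^'c^'m" and B :: "real^'r^'c" and \<kappa> :: "real^'r" and xs :: "real^'m"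
    and d :: "real^'v^'e" and star0 :: "real^'v^'v" and star1 :: "real^'e^'e"
    and Rd :: "real^('v \<times> 'm) \<Rightarrow> real^('e \<times> 'm)^('e \<times> 'm)"
    and \<alpha> :: real and S :: "(real^('v \<times> 'm)) set"
    and X :: "real \<Rightarrow> real^('v \<times> 'm)" and tstar :: real
  assumes B_inc: "is_incidence_cols B"
    and xs_pos: "\<forall>i. xs$i > 0"
    and kappa_pos: "\<forall>j. \<kappa>$j > 0"
    and d_inc: "is_skeleton_incidence d"
    and star0_pos: "is_pos_diag star0"
    and star1_pos: "is_pos_diag star1"
    and alpha_pos: "\<alpha> > 0"
    and S_open: "open S" and S_orth: "nonneg_orthant \<subseteq> S"
    and Rd_C1: "\<exists>Rd' :: real^('v \<times> 'm) \<Rightarrow> ((real^('v \<times> 'm)) \<Rightarrow>\<^sub>L (real^('e \<times> 'm)^('e \<times> 'm))).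
                  (\<forall>Y\<in>S. (Rd has_derivative blinfun_apply (Rd' Y)) (at Y)) \<and> continuous_on S Rd'"
    and Rd_diag: "\<forall>Y\<in>nonneg_orthant. \<forall>p q. p \<noteq> q \<longrightarrow> Rd Y $ p $ q = 0"
    and Rd_ge: "\<forall>Y\<in>nonneg_orthant. \<forall>p. Rd Y $ p $ p \<ge> \<alpha>"
    and tstar_nonneg: "0 \<le> tstar"
    and X_orth: "\<forall>t\<in>{0..tstar}. X t \<in> nonneg_orthant"
    and X_sol: "\<forall>t\<in>{0..tstar}.
                  (X has_vector_derivative F_star Z B \<kappa> xs d star0 star1 Rd (X t)) (at t within {0..tstar})"
  shows "\<forall>k. X 0 $ k > 0 \<longrightarrow> X tstar $ k > 0"
proof (intro allI impI)
  fix k :: "'v \<times> 'm" assume pos0: "X 0 $ k > 0"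
  obtain v i where k: "k = (v,i)" by (cases k)
  define I where "I = {0..tstar}"
  define MM where "MM Y = kron (matrix_inv star0) (mat 1 :: real^'m^'m) ** Delta_d d star1 (Rd Y)" for Y
  define c where "c t = MM (X t) $ k $ k / xs$i + gfun Z B \<kappa> xs i (compartment (X t) v)" for t
  define Fk where "Fk t = F_star Z B \<kappa> xs d star0 star1 Rd (X t) $ k" for t
  have low: "Fk t \<ge> - c t * X t $ k" if "t \<in> I" for t
  proof -
    have Xo: "X t \<in> nonneg_orthant" using X_orth that by (simp add: I_def)
    have Yp: "\<forall>p. X t $ p \<ge> 0" using Xo by (simp add: nonneg_orthant_def)
    have Rdg: "\<forall>p q. p \<noteq> q \<longrightarrow> Rd (X t) $p$q = 0" using Rd_diag Xo by auto
    have Rp: "\<forall>p. Rd (X t)$p$p \<ge> 0" using Rd_ge alpha_pos Xo by (meson less_imp_le order_trans)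
    have D: "(MM (X t) *v quot_star (X t) xs)$k \<le> MM (X t)$k$k * (X t$k / xs$(snd k))"
      unfolding MM_def by (rule diff_bound[OF d_inc star0_pos star1_pos Rdg Rp Yp xs_pos])
    have cp: "\<forall>l. compartment (X t) v $ l \<ge> 0" using Yp by (simp add: compartment_def)
    have R: "reaction_field Z B \<kappa> xs (compartment (X t) v) $ i
        \<ge> -(compartment (X t) v $ i * gfun Z B \<kappa> xs i (compartment (X t) v))"
      by (rule react_bound[OF B_inc kappa_pos xs_pos cp])
    have F: "Fk t = - (MM (X t) *v quot_star (X t) xs)$k
               + reaction_field Z B \<kappa> xs (compartment (X t) v) $ i"
      unfolding Fk_def F_star_def MM_def big_F_def k by simp
    have ce: "c t * X t $ k = MM (X t)$k$k * (X t $ k / xs$(snd k))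
        + compartment (X t) v $ i * gfun Z B \<kappa> xs i (compartment (X t) v)"
      by (simp add: c_def compartment_def k algebra_simps)
    show ?thesis using D R F ce by linarith
  qed
  have Xc: "continuous_on I X"
    using X_sol by (auto intro: continuous_on_vector_derivative simp: I_def)
  obtain Rd' where Rd': "\<forall>Y\<in>S. (Rd has_derivative blinfun_apply (Rd' Y)) (at Y)" using Rd_C1 by blast
  have Rdc: "continuous_on S Rd"
    by (rule continuous_at_imp_continuous_on) (use Rd' has_derivative_continuous in blast)
  have XS: "X ` I \<subseteq> S" using X_orth S_orth I_def by auto
  have RXc: "continuous_on I (\<lambda>t. Rd (X t))" by (rule continuous_on_compose2[OF Rdc Xc XS])
  have MMc: "continuous_on I (\<lambda>t. MM (X t))"
    unfolding MM_def Delta_d_def by (intro cont_mm continuous_on_const RXc)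
  have xsne: "xs $ l \<noteq> 0" for l using xs_pos by (metis less_irrefl)
  have cc: "continuous_on I c"
    unfolding c_def gfun_def compartment_def
    by (intro continuous_intros MMc Xc) (simp_all add: xsne)
  have Ine: "I \<noteq> {}" using tstar_nonneg by (simp add: I_def)
  obtain t0 where "t0 \<in> I" "\<forall>t\<in>I. c t \<le> c t0"
    using continuous_attains_sup[OF _ Ine cc] by (auto simp: I_def)
  then obtain C where C: "\<forall>t\<in>I. c t \<le> C" by blast
  define y where "y t = X t $ k" for t
  have yd: "(y has_real_derivative Fk t) (at t within I)" if "t \<in> I" for t
    unfolding has_real_derivative_iff_has_vector_derivative y_def Fk_def
    using bounded_linear.has_vector_derivative[OF bounded_linear_vec_nth X_sol[rule_format, OF that[unfolded I_def]]]
    by (simp add: I_def)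
  define h where "h t = y t * exp (C*t)" for t
  define h' where "h' t = Fk t * exp (C*t) + exp (C*t) * C * y t" for t
  have hd: "(h has_real_derivative h' t) (at t within I)" if "t \<in> I" for t
    unfolding h_def[abs_def] h'_def
    by (rule DERIV_mult[OF yd[OF that]]) (auto intro!: derivative_eq_intros)
  have h'p: "h' t \<ge> 0" if "t \<in> I" for t
  proof -
    have y0: "y t \<ge> 0" using X_orth that unfolding I_def y_def nonneg_orthant_def by blast
    have "Fk t + C * y t \<ge> (C - c t) * y t" using low[OF that] by (simp add: y_def algebra_simps)
    moreover have "(C - c t) * y t \<ge> 0" using C that y0 by simp
    ultimately have "Fk t + C * y t \<ge> 0" by linarith
    then have "exp (C*t) * (Fk t + C * y t) \<ge> 0" by simp
    then show ?thesis by (simp add: h'_def algebra_simps)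
  qed
  have "\<exists>x\<in>{0..tstar}. h tstar - h 0 = (\<lambda>u. h' x * u) (tstar - 0)"
    by (rule mvt_very_simple[OF tstar_nonneg])
       (use hd in \<open>auto simp: has_field_derivative_def I_def mult_commute_abs\<close>)
  then obtain xi where "xi \<in> I" "h tstar - h 0 = h' xi * tstar" by (auto simp: I_def)
  then have "h tstar \<ge> h 0" using h'p tstar_nonneg by (metis diff_ge_0_iff_ge mult_nonneg_nonneg)
  moreover have "h 0 > 0" using pos0 by (simp add: h_def y_def)
  ultimately have "y tstar * exp (C*tstar) > 0" by (simp add: h_def)
  then show "X tstar $ k > 0" by (simp add: y_def zero_less_mult_iff)
qed

end
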